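(* Let $p_0,p_1,p_2,T>0$, $q_k=p_k^{-1/2}$, $\Omega>0$, and let $$C=\tfrac1{16q_0^2}\Big[\big(1+\tfrac{q_0}{q_1}\big)^2\big(1+\tfrac{q_1}{q_2}\big)^2+\big(1-\tfrac{q_0}{q_1}\big)^2\big(1-\tfrac{q_1}{q_2}\big)^2\Big],\quad K=\tfrac1{8q_0^2}\big(1-\tfrac{q_0^2}{q_1^2}\big)\big(1-\tfrac{q_1^2}{q_2^2}\big),\quad \zeta=2q_1T,$$ $R=K/C$ and $J(s)=\frac1{2\pi}\int_0^{\Omega^{1/2}}\frac{e^{isu}}{C+K\cos\zeta u}\,du$ for $s\in\mathbb{R}$. Then for $s\in\mathbb{R}$, $$J(s)=\frac{\Omega^{1/2}}{2C\pi}\sum_{m=0}^\infty\sum_{l=0}^m\Big(-\frac R2\Big)^m\binom ml e^{i\frac{\Omega^{1/2}}2(s+(m-2l)\zeta)}\operatorname{sinc}\Big(\tfrac{\Omega^{1/2}}2(s+(m-2l)\zeta)\Big).$$ Moreover, if $J_M$ denotes the partial sum of this series over $0\le m\le M$, then $$\sup_{s\in\mathbb{R}}|J(s)-J_M(s)|\le\frac{\Omega^{1/2}}{2C\pi}\frac{|R|^{M+1}}{1-|R|}.$$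
   Context: $\operatorname{sinc}x=\frac{\sin x}{x}$ (with $\operatorname{sinc}0=1$). (These quantities are such that $|R|<1$.) *)

theory Defs
  imports "HOL-Analysis.Analysis"
begin

definition sinc :: "real \<Rightarrow> real" where
  "sinc x = (if x = 0 then 1 else sin x / x)"

end

theory Submission imports Defs begin

lemma exp_int:
  fixes w A :: real assumes "A > 0"
  shows "((\<lambda>u. exp (\<i> * complex_of_real (w * u))) has_integral
     (complex_of_real A * (exp (\<i> * complex_of_real (A/2 * w)) * complex_of_real (sinc (A/2 * w))))) {0..A}"
proof (cases "w = 0")
  case True
  then show ?thesis using assms has_integral_const_real[of "1::complex" 0 A] by (simp add: sinc_def scaleR_conv_of_real)
next
  case False
  have d: "((\<lambda>u. exp (\<i> * complex_of_real (w * u)) / (\<i> * complex_of_real w)) has_vector_derivative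
      exp (\<i> * complex_of_real (w * x))) (at x within {0..A})" for x
  proof -
    have "((\<lambda>z. exp (\<i> * (complex_of_real w * z)) / (\<i> * complex_of_real w)) has_field_derivative
      exp (\<i> * (complex_of_real w * complex_of_real x))) (at (complex_of_real x))"
      using False by (auto intro!: derivative_eq_intros simp: field_simps)
    from has_vector_derivative_real_field[OF this] show ?thesis using False
      by (auto simp: has_vector_derivative_at_within algebra_simps)
  qed
  have "((\<lambda>u. exp (\<i> * complex_of_real (w * u))) has_integral
     (exp (\<i> * complex_of_real (w * A)) / (\<i> * complex_of_real w) - exp (\<i> * complex_of_real (w * 0)) / (\<i> * complex_of_real w))) {0..A}"
    using assms by (intro fundamental_theorem_of_calculus d) auto
  moreover have "exp (\<i> * complex_of_real (w * A)) / (\<i> * complex_of_real w) - exp (\<i> * complex_of_real (w * 0)) / (\<i> * complex_of_real w)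
     = complex_of_real A * (exp (\<i> * complex_of_real (A/2 * w)) * complex_of_real (sinc (A/2 * w)))"
  proof -
    let ?y = "A/2*w"
    have y0: "?y \<noteq> 0" using assms False by simp
    have e1: "exp (\<i> * complex_of_real (w * A)) = cis (2*?y)" by (simp add: cis_conv_exp mult.commute)
    have e2: "exp (\<i> * complex_of_real ?y) = cis ?y" by (simp add: cis_conv_exp)
    have h: "cis (2*y) - 1 = cis y * (2 * \<i> * sin y)" for y
      using sin_double[of y] cos_double_sin[of y]
      by (simp add: complex_eq_iff algebra_simps power2_eq_square)
    have "cis (2*?y) - 1 = cis ?y * (2 * \<i> * sin ?y)" by (rule h)
    then show ?thesis unfolding e1 e2 sinc_def using y0 False assms
      by (simp add: field_simps)
  qed
  ultimately show ?thesis by simp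
qed

lemma cos_pow:
  fixes x :: real
  shows "complex_of_real ((cos x) ^ m) = (\<Sum>l\<le>m. complex_of_real (real (m choose l) / 2 ^ m) * exp (\<i> * complex_of_real ((real m - 2 * real l) * x)))"
proof -
  have "complex_of_real (cos x) = (exp (- (\<i> * x)) + exp (\<i> * x)) / 2"
    by (simp add: cos_of_real[symmetric] cos_exp_eq del: cos_of_real)
  hence "complex_of_real ((cos x) ^ m) = (exp (- (\<i> * x)) + exp (\<i> * x)) ^ m / 2 ^ m"
    by (metis of_real_power power_divide)
  also have "\<dots> = (\<Sum>l\<le>m. of_nat (m choose l) * exp (- (\<i> * x)) ^ l * exp (\<i> * x) ^ (m - l)) / 2 ^ m"
    by (simp add: binomial_ring)
  also have "\<dots> = (\<Sum>l\<le>m. complex_of_real (real (m choose l) / 2 ^ m) * exp (\<i> * complex_of_real ((real m - 2 * real l) * x)))"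
    unfolding sum_divide_distrib
  proof (intro sum.cong refl)
    fix l assume "l \<in> {..m}"
    hence lm: "l \<le> m" by simp
    have "exp (- (\<i> * x)) ^ l * exp (\<i> * x) ^ (m - l) = exp (of_nat l * (- (\<i> * x)) + of_nat (m - l) * (\<i> * x))"
      by (simp only: exp_add exp_of_nat_mult)
    also have "of_nat l * (- (\<i> * x)) + of_nat (m - l) * (\<i> * x) = \<i> * complex_of_real ((real m - 2 * real l) * x)"
      using lm by (simp add: of_nat_diff algebra_simps)
    finally show "of_nat (m choose l) * exp (- (\<i> * x)) ^ l * exp (\<i> * x) ^ (m - l) / 2 ^ m =
         complex_of_real (real (m choose l) / 2 ^ m) * exp (\<i> * complex_of_real ((real m - 2 * real l) * x))"
      by simp
  qed
  finally show ?thesis .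
qed

theorem theorem4p2:
  fixes p0 p1 p2 T \<Omega> :: real
  assumes "p0 > 0" and "p1 > 0" and "p2 > 0" and "T > 0" and "\<Omega> > 0"
  defines "q0 \<equiv> p0 powr (-1/2)"
      and "q1 \<equiv> p1 powr (-1/2)"
      and "q2 \<equiv> p2 powr (-1/2)"
  defines "C \<equiv> 1 / (16 * q0\<^sup>2) *
              ((1 + q0/q1)\<^sup>2 * (1 + q1/q2)\<^sup>2 + (1 - q0/q1)\<^sup>2 * (1 - q1/q2)\<^sup>2)"
      and "K \<equiv> 1 / (8 * q0\<^sup>2) * (1 - q0\<^sup>2/q1\<^sup>2) * (1 - q1\<^sup>2/q2\<^sup>2)"
      and "\<zeta> \<equiv> 2 * q1 * T"
  defines "R \<equiv> K / C"
  defines "J \<equiv> (\<lambda>s::real. complex_of_real (1 / (2 * pi)) *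
              integral {0..sqrt \<Omega>}
                (\<lambda>u. exp (\<i> * complex_of_real (s * u)) / complex_of_real (C + K * cos (\<zeta> * u))))"
  defines "t \<equiv> (\<lambda>(s::real) (m::nat) (l::nat).
              complex_of_real ((- R / 2) ^ m * real (m choose l)) *
              exp (\<i> * complex_of_real (sqrt \<Omega> / 2 * (s + (real m - 2 * real l) * \<zeta>))) *
              complex_of_real (sinc (sqrt \<Omega> / 2 * (s + (real m - 2 * real l) * \<zeta>))))"
  defines "JM \<equiv> (\<lambda>(M::nat) (s::real). complex_of_real (sqrt \<Omega> / (2 * C * pi)) *
              (\<Sum>m\<le>M. \<Sum>l\<le>m. t s m l))"
  shows "(\<forall>s::real. (\<lambda>m. complex_of_real (sqrt \<Omega> / (2 * C * pi)) * (\<Sum>l\<le>m. t s m l)) sums J s)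
       \<and> (\<forall>M::nat. \<forall>s::real.
            norm (J s - JM M s) \<le> sqrt \<Omega> / (2 * C * pi) * \<bar>R\<bar> ^ (M + 1) / (1 - \<bar>R\<bar>))"
  proof -
  have q0: "q0 > 0" and q1: "q1 > 0" and q2: "q2 > 0"
    using assms(1-3) by (simp_all add: q0_def q1_def q2_def)
  define a where "a = q0 / q1"
  define b where "b = q1 / q2"
  have a0: "a > 0" and b0: "b > 0" using q0 q1 q2 by (simp_all add: a_def b_def)
  define X where "X = (1 + a) * (1 + b)"
  define Y where "Y = (1 - a) * (1 - b)"
  have CX: "C = (X^2 + Y^2) / (16 * q0^2)"
    by (simp add: C_def X_def Y_def a_def b_def power_mult_distrib)
  have e1: "1 - q0^2/q1^2 = (1 - a) * (1 + a)" using q1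
    by (simp add: a_def power_divide algebra_simps power2_eq_square)
  have e2: "1 - q1^2/q2^2 = (1 - b) * (1 + b)" using q2
    by (simp add: b_def power_divide algebra_simps power2_eq_square)
  have KX: "K = 2 * X * Y / (16 * q0^2)"
    unfolding K_def e1 e2 X_def Y_def using q0 by (simp add: field_simps)
  have XY1: "X - Y = 2 * (a + b)" by (simp add: X_def Y_def algebra_simps)
  have XY2: "X + Y = 2 * (1 + a * b)" by (simp add: X_def Y_def algebra_simps)
  have p1: "(X - Y)^2 > 0" using XY1 a0 b0 by simp
  have "a * b > 0" using a0 b0 by simp
  hence p2: "(X + Y)^2 > 0" using XY2 by simp
  have d0: "16 * q0^2 > 0" using q0 by simp
  have "X > 0" using a0 b0 by (simp add: X_def)
  hence "X^2 + Y^2 > 0" by (simp add: add_pos_nonneg)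
  hence Cpos: "C > 0" unfolding CX using d0 by simp
  have KC: "\<bar>K\<bar> < C"
  proof -
    have "\<bar>2 * X * Y\<bar> < X^2 + Y^2" using p1 p2 by (simp add: abs_less_iff power2_eq_square algebra_simps)
    then have "\<bar>2 * X * Y\<bar> / (16 * q0^2) < (X^2 + Y^2) / (16 * q0^2)"
      using d0 by (intro divide_strict_right_mono) auto
    then show ?thesis unfolding CX KX using d0 by (simp add: abs_divide)
  qed
  have R1: "\<bar>R\<bar> < 1" using KC Cpos by (simp add: R_def abs_divide)
  have KRC: "K = R * C" using Cpos by (simp add: R_def)
  have pos1: "1 + R * cos y \<ge> 1 - \<bar>R\<bar>" for y
  proof -
    have "\<bar>R * cos y\<bar> \<le> \<bar>R\<bar>" using abs_cos_le_one[of y] by (simp add: abs_mult mult_left_le)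
    then show ?thesis by linarith
  qed
  have pos2: "1 + R * cos y > 0" for y using pos1[of y] R1 by linarith
  have den: "C + K * cos y = C * (1 + R * cos y)" for y by (simp add: KRC algebra_simps)
  have den0: "C + K * cos y \<noteq> 0" for y using den[of y] pos2[of y] Cpos by simp
  define A where "A = sqrt \<Omega>"
  have A0: "A > 0" using assms(5) by (simp add: A_def)
  have term_int: "((\<lambda>u. complex_of_real ((1/C) * (- R * cos (\<zeta> * u)) ^ m) * exp (\<i> * complex_of_real (s * u)))
      has_integral (complex_of_real (A / C) * (\<Sum>l\<le>m. t s m l))) {0..A}" for s m
  proof -
    have eq: "complex_of_real ((1/C) * (- R * cos (\<zeta> * u)) ^ m) * exp (\<i> * complex_of_real (s * u))
      = (\<Sum>l\<le>m. complex_of_real (1/C * ((- R / 2) ^ m * real (m choose l))) *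
           exp (\<i> * complex_of_real ((s + (real m - 2 * real l) * \<zeta>) * u)))" for u
    proof -
      have rr: "(1/C) * (- R * cos (\<zeta> * u)) ^ m = (1/C * (-R)^m) * (cos (\<zeta> * u)) ^ m"
        by (simp only: power_mult_distrib mult.assoc)
      have "complex_of_real ((1/C) * (- R * cos (\<zeta> * u)) ^ m) = complex_of_real (1/C * (-R)^m) * complex_of_real ((cos (\<zeta> * u)) ^ m)"
        unfolding rr of_real_mult ..
      also have "\<dots> = (\<Sum>l\<le>m. complex_of_real (1/C * (-R)^m) * (complex_of_real (real (m choose l) / 2 ^ m) * exp (\<i> * complex_of_real ((real m - 2 * real l) * (\<zeta> * u)))))"
        unfolding cos_pow sum_distrib_left ..
      finally have "complex_of_real ((1/C) * (- R * cos (\<zeta> * u)) ^ m) * exp (\<i> * complex_of_real (s * u)) =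
         (\<Sum>l\<le>m. complex_of_real (1/C * (-R)^m) * (complex_of_real (real (m choose l) / 2 ^ m) * exp (\<i> * complex_of_real ((real m - 2 * real l) * (\<zeta> * u))))) * exp (\<i> * complex_of_real (s * u))" by simp
      also have "\<dots> = (\<Sum>l\<le>m. complex_of_real (1/C * ((- R / 2) ^ m * real (m choose l))) *
           exp (\<i> * complex_of_real ((s + (real m - 2 * real l) * \<zeta>) * u)))"
        unfolding sum_distrib_right
      proof (intro sum.cong refl)
        fix l
        have c1: "exp (\<i> * complex_of_real ((real m - 2 * real l) * (\<zeta> * u))) * exp (\<i> * complex_of_real (s * u))
          = exp (\<i> * complex_of_real ((s + (real m - 2 * real l) * \<zeta>) * u))"
          by (simp add: exp_add[symmetric] algebra_simps)
        have c2: "complex_of_real (1/C * (-R)^m) * complex_of_real (real (m choose l) / 2 ^ m) = complex_of_real (1/C * ((- R / 2) ^ m * real (m choose l)))"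
        proof -
          have "1/C * (-R)^m * (real (m choose l) / 2 ^ m) = 1/C * ((- R / 2) ^ m * real (m choose l))"
            unfolding power_divide by (simp add: algebra_simps)
          then show ?thesis by (simp only: of_real_mult[symmetric])
        qed
        show "complex_of_real (1/C * (-R)^m) * (complex_of_real (real (m choose l) / 2 ^ m) * exp (\<i> * complex_of_real ((real m - 2 * real l) * (\<zeta> * u)))) * exp (\<i> * complex_of_real (s * u))
          = complex_of_real (1/C * ((- R / 2) ^ m * real (m choose l))) * exp (\<i> * complex_of_real ((s + (real m - 2 * real l) * \<zeta>) * u))"
          unfolding c1[symmetric] c2[symmetric] by (simp only: mult.assoc)
      qed
      finally show ?thesis .
    qed
    have "((\<lambda>u. \<Sum>l\<le>m. complex_of_real (1/C * ((- R / 2) ^ m * real (m choose l))) *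
           exp (\<i> * complex_of_real ((s + (real m - 2 * real l) * \<zeta>) * u))) has_integral
         (\<Sum>l\<le>m. complex_of_real (1/C * ((- R / 2) ^ m * real (m choose l))) *
           (complex_of_real A * (exp (\<i> * complex_of_real (A/2 * (s + (real m - 2 * real l) * \<zeta>))) * complex_of_real (sinc (A/2 * (s + (real m - 2 * real l) * \<zeta>))))))) {0..A}"
      by (intro has_integral_sum finite_atMost has_integral_mult_right exp_int A0)
    moreover have "(\<Sum>l\<le>m. complex_of_real (1/C * ((- R / 2) ^ m * real (m choose l))) *
           (complex_of_real A * (exp (\<i> * complex_of_real (A/2 * (s + (real m - 2 * real l) * \<zeta>))) * complex_of_real (sinc (A/2 * (s + (real m - 2 * real l) * \<zeta>))))))
       = complex_of_real (A / C) * (\<Sum>l\<le>m. t s m l)"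
      unfolding sum_distrib_left t_def A_def by (intro sum.cong refl) (simp add: field_simps)
    ultimately show ?thesis unfolding eq by simp
  qed
  have geo: "1 / (C + K * cos y) - (\<Sum>m\<le>M. (1/C) * (- R * cos y) ^ m) = (1/C) * (- R * cos y) ^ (Suc M) / (1 + R * cos y)" for y M
  proof -
    have x1: "- R * cos y \<noteq> 1" using pos2[of y] by auto
    have "(\<Sum>m\<le>M. (1/C) * (- R * cos y) ^ m) = (1/C) * ((1 - (- R * cos y) ^ Suc M) / (1 - (- R * cos y)))"
      unfolding sum_distrib_left[symmetric] lessThan_Suc_atMost[symmetric] sum_gp_strict using x1 by simp
    moreover have "C + C * (R * cos y) \<noteq> 0" using den0[of y] den[of y] by (simp add: algebra_simps)
    ultimately show ?thesis unfolding den using pos2[of y] Cpos by (simp add: field_simps)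
  qed
  have geob: "\<bar>(1/C) * (- R * cos y) ^ (Suc M) / (1 + R * cos y)\<bar> \<le> (1/C) * \<bar>R\<bar> ^ Suc M / (1 - \<bar>R\<bar>)" for y M
  proof -
    have "\<bar>(- R * cos y) ^ (Suc M)\<bar> \<le> \<bar>R\<bar> ^ Suc M"
    proof -
      have h: "\<bar>- R * cos y\<bar> \<le> \<bar>R\<bar>" using abs_cos_le_one[of y] by (simp add: abs_mult mult_left_le)
      show ?thesis using power_mono[OF h abs_ge_zero, of "Suc M"] by (simp only: power_abs)
    qed
    then show ?thesis using pos1[of y] pos2[of y] R1 Cpos
      by (auto simp: abs_mult abs_divide intro!: frac_le mult_left_mono)
  qed
  have main: "norm (J s - JM M s) \<le> sqrt \<Omega> / (2 * C * pi) * \<bar>R\<bar> ^ (M + 1) / (1 - \<bar>R\<bar>)" for M s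
  proof -
    define f where "f = (\<lambda>u. exp (\<i> * complex_of_real (s * u)) / complex_of_real (C + K * cos (\<zeta> * u)))"
    have nz: "complex_of_real C + complex_of_real K * complex_of_real (cos (\<zeta> * u)) \<noteq> 0" for u
      using den0[of "\<zeta> * u"] by (metis of_real_add of_real_mult of_real_eq_0_iff)
    have "continuous_on {0..A} f" unfolding f_def using nz
      by (intro continuous_intros) auto
    then have fi: "(f has_integral integral {0..A} f) {0..A}"
      using integrable_continuous_interval by blast
    define S where "S = (\<Sum>m\<le>M. complex_of_real (A / C) * (\<Sum>l\<le>m. t s m l))"
    have gi: "((\<lambda>u. \<Sum>m\<le>M. complex_of_real ((1/C) * (- R * cos (\<zeta> * u)) ^ m) * exp (\<i> * complex_of_real (s * u))) has_integral S) {0..A}"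
      unfolding S_def by (intro has_integral_sum finite_atMost term_int)
    have di: "((\<lambda>u. f u - (\<Sum>m\<le>M. complex_of_real ((1/C) * (- R * cos (\<zeta> * u)) ^ m) * exp (\<i> * complex_of_real (s * u)))) has_integral (integral {0..A} f - S)) {0..A}"
      by (intro has_integral_diff fi gi)
    have dn: "norm (f u - (\<Sum>m\<le>M. complex_of_real ((1/C) * (- R * cos (\<zeta> * u)) ^ m) * exp (\<i> * complex_of_real (s * u)))) \<le> (1/C) * \<bar>R\<bar> ^ Suc M / (1 - \<bar>R\<bar>)" for u
    proof -
      have "f u - (\<Sum>m\<le>M. complex_of_real ((1/C) * (- R * cos (\<zeta> * u)) ^ m) * exp (\<i> * complex_of_real (s * u)))
        = complex_of_real (1 / (C + K * cos (\<zeta> * u)) - (\<Sum>m\<le>M. (1/C) * (- R * cos (\<zeta> * u)) ^ m)) * exp (\<i> * complex_of_real (s * u))"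
        unfolding f_def sum_distrib_right[symmetric] by (simp add: divide_inverse algebra_simps)
      also have "norm \<dots> = \<bar>1 / (C + K * cos (\<zeta> * u)) - (\<Sum>m\<le>M. (1/C) * (- R * cos (\<zeta> * u)) ^ m)\<bar>"
        by (simp only: norm_mult norm_of_real norm_exp_i_times mult_1_right)
      finally show ?thesis using geo geob by simp
    qed
    have B0: "0 \<le> (1/C) * \<bar>R\<bar> ^ Suc M / (1 - \<bar>R\<bar>)" using Cpos R1 by simp
    have nb: "norm (integral {0..A} f - S) \<le> (1/C) * \<bar>R\<bar> ^ Suc M / (1 - \<bar>R\<bar>) * A"
    proof -
      have "norm (integral {0..A} f - S) \<le> (1/C) * \<bar>R\<bar> ^ Suc M / (1 - \<bar>R\<bar>) * Henstock_Kurzweil_Integration.content (cbox 0 A)"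
        by (rule has_integral_bound[OF B0]) (use di dn in \<open>auto simp: cbox_interval\<close>)
      then show ?thesis using A0 by simp
    qed
    have JJ: "J s - JM M s = complex_of_real (1 / (2 * pi)) * (integral {0..A} f - S)"
      unfolding J_def JM_def f_def S_def A_def sum_distrib_left[symmetric]
      by (simp add: algebra_simps)
    have "norm (J s - JM M s) = (1 / (2 * pi)) * norm (integral {0..A} f - S)"
      unfolding JJ norm_mult norm_of_real using pi_gt_zero by simp
    also have "\<dots> \<le> (1 / (2 * pi)) * ((1/C) * \<bar>R\<bar> ^ Suc M / (1 - \<bar>R\<bar>) * A)"
      using nb by (intro mult_left_mono) auto
    also have "\<dots> = sqrt \<Omega> / (2 * C * pi) * \<bar>R\<bar> ^ (M + 1) / (1 - \<bar>R\<bar>)"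
      by (simp add: A_def mult_ac)
    finally show ?thesis .
  qed
  have conv: "(\<lambda>m. complex_of_real (sqrt \<Omega> / (2 * C * pi)) * (\<Sum>l\<le>m. t s m l)) sums J s" for s
  proof -
    have lim0: "(\<lambda>M. sqrt \<Omega> / (2 * C * pi) * \<bar>R\<bar> ^ (M + 1) / (1 - \<bar>R\<bar>)) \<longlonglongrightarrow> 0"
    proof -
      have p: "(\<lambda>M. \<bar>R\<bar> ^ (M + 1)) \<longlonglongrightarrow> 0"
        using LIMSEQ_Suc[OF LIMSEQ_power_zero[of "\<bar>R\<bar>"]] R1 by simp
      show ?thesis by (intro tendsto_divide_zero tendsto_mult_right_zero p)
    qed
    have l1: "(\<lambda>M. J s - JM M s) \<longlonglongrightarrow> 0"
      by (rule Lim_null_comparison[OF _ lim0]) (rule always_eventually, rule allI, rule main)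
    have "(\<lambda>M. JM M s) \<longlonglongrightarrow> J s"
    proof -
      from tendsto_minus[OF l1] have "(\<lambda>M. JM M s - J s) \<longlonglongrightarrow> 0" by simp
      then show ?thesis by (rule LIM_zero_cancel)
    qed
    then have "(\<lambda>n. (\<Sum>m<Suc n. complex_of_real (sqrt \<Omega> / (2 * C * pi)) * (\<Sum>l\<le>m. t s m l))) \<longlonglongrightarrow> J s"
      unfolding JM_def lessThan_Suc_atMost sum_distrib_left .
    then show ?thesis
      unfolding sums_def by (rule LIMSEQ_imp_Suc)
  qed
  show ?thesis using conv main by blast
qed

end
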